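(* Let $H:\mathbb{R}^{2m}\to\mathbb{R}$ be smooth and consider the canonical Hamiltonian system $\dot x^k=\partial H/\partial p^k$, $\dot p^k=-\partial H/\partial x^k$. Let $\bar y\in\mathbb{R}^{2m}$ with $F'=SH_{yy}(\bar y)$ invertible. Consider the scheme $$y_{n+1}-y_n=\theta_n\,S\,\bar\nabla H(y_n,y_{n+1}),\qquad \theta_n=2\Big(SR+F'\coth\frac{h_nF'}{2}\Big)^{-1},$$ where $\bar\nabla H$ is the coordinate increment discrete gradient. Here $R=(R_{jk})$ is the antisymmetric $2m\times 2m$ matrix with $$R_{jk}=H_{y^jy^k}\ (k<j),\qquad R_{jj}=0,\qquad R_{jk}=-H_{y^jy^k}\ (k>j).$$ $F'$ and $R$ are evaluated at $\bar y$. Then this scheme is locally exact at $\bar y$.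
   Context: Notation: - $y=(x,p)\in\mathbb{R}^{2m}$, i.e. $y^1=x^1,\dots,y^m=x^m$, $y^{m+1}=p^1,\dots,y^{2m}=p^m$; $y_n=(x_n,p_n)$ and $h_n$ is the time step. - $S=\begin{pmatrix}0&1\\-1&0\end{pmatrix}$ with $m\times m$ blocks. - $H_{yy}$ is the Hessian, so $F'=\begin{pmatrix}H_{px}&H_{pp}\\ -H_{xx}&-H_{xp}\end{pmatrix}$ at $\bar y$, and $F=SH_y=(H_p,-H_x)^T$ at $\bar y$. The coordinate increment discrete gradient has components $$\frac{\Delta H}{\Delta y^j}=\frac{H(\hat y^j_n)-H(\hat y^{j-1}_n)}{y^j_{n+1}-y^j_n},\qquad \hat y^j_n=(y^1_{n+1},\dots,y^j_{n+1},y^{j+1}_n,\dots,y^{2m}_n),$$ with the partial derivative as limit when $y^j_{n+1}=y^j_n$. The exact discretization of the linearized system $\dot\nu=F'\nu+F$ (with $\nu=y-\bar y$) is $\nu_{n+1}=e^{h_nF'}\nu_n+(e^{h_nF'}-1)(F')^{-1}F$. The linearization of the scheme at $\bar y$ is obtained as follows: - substitute $y_n=\bar y+\nu_n$ and $y_{n+1}=\bar y+\nu_{n+1}$; - keep $\theta_n$ fixed at its value at $\bar y$; - keep terms to first order in $\nu$. The scheme is locally exact at $\bar y$ if the resulting linear relation coincides with the exact discretization, as a relation determining $\nu_{n+1}$ from $\nu_n$. *)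

theory Defs
  imports "HOL-Analysis.Analysis"
begin

text \<open>Coordinates of y = (x,p) in R^(2m) are indexed by bool \<times> 'm:
  (False,k) is x^k and (True,k) is p^k.  The linear order y^1,...,y^(2m) of the
  paper (x^1..x^m, p^1..p^m) is the lexicographic order below, with 'm linearly ordered.\<close>

definition idx_lt :: "bool \<times> 'm::linorder \<Rightarrow> bool \<times> 'm \<Rightarrow> bool" where
  "idx_lt a b \<longleftrightarrow> fst a < fst b \<or> (fst a = fst b \<and> snd a < snd b)"

definition idx_le :: "bool \<times> 'm::linorder \<Rightarrow> bool \<times> 'm \<Rightarrow> bool" where
  "idx_le a b \<longleftrightarrow> idx_lt a b \<or> a = b"

text \<open>The symplectic matrix S = ((0,1),(-1,0)) in m \<times> m blocks.\<close>
definition symp :: "real ^ (bool \<times> 'm::finite) ^ (bool \<times> 'm)" where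
  "symp = (\<chi> a b. if snd a = snd b then
             (if \<not> fst a \<and> fst b then 1 else if fst a \<and> \<not> fst b then -1 else 0) else 0)"

definition partial :: "'i \<Rightarrow> (real ^ 'i \<Rightarrow> real) \<Rightarrow> real ^ 'i \<Rightarrow> real" where
  "partial i f y = deriv (\<lambda>t. f (y + t *\<^sub>R axis i 1)) 0"

fun iter_partial :: "'i list \<Rightarrow> (real ^ 'i \<Rightarrow> real) \<Rightarrow> real ^ 'i \<Rightarrow> real" where
  "iter_partial [] f = f"
| "iter_partial (i # is) f = partial i (iter_partial is f)"

definition smooth :: "(real ^ 'i \<Rightarrow> real) \<Rightarrow> bool" where
  "smooth f \<longleftrightarrow> (\<forall>is. continuous_on UNIV (iter_partial is f) \<and>
      (\<forall>i y. (\<lambda>t. iter_partial is f (y + t *\<^sub>R axis i 1)) differentiable (at 0)))"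

definition grad :: "(real ^ 'i \<Rightarrow> real) \<Rightarrow> real ^ 'i \<Rightarrow> real ^ 'i" where
  "grad f y = (\<chi> j. partial j f y)"

definition hess :: "(real ^ 'i \<Rightarrow> real) \<Rightarrow> real ^ 'i \<Rightarrow> real ^ 'i ^ 'i" where
  "hess f y = (\<chi> j k. partial j (partial k f) y)"

definition mat_exp :: "real ^ 'n ^ 'n \<Rightarrow> real ^ 'n ^ 'n" where
  "mat_exp A = (\<Sum>k. (1 / fact k) *\<^sub>R (((**) A) ^^ k) (mat 1))"

definition mat_sinh :: "real ^ 'n ^ 'n \<Rightarrow> real ^ 'n ^ 'n" where
  "mat_sinh A = (1/2) *\<^sub>R (mat_exp A - mat_exp (- A))"

definition mat_cosh :: "real ^ 'n ^ 'n \<Rightarrow> real ^ 'n ^ 'n" where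
  "mat_cosh A = (1/2) *\<^sub>R (mat_exp A + mat_exp (- A))"

definition mat_coth :: "real ^ 'n ^ 'n \<Rightarrow> real ^ 'n ^ 'n" where
  "mat_coth A = mat_cosh A ** matrix_inv (mat_sinh A)"

text \<open>Points yhat^j (coordinates up to and including j from y', the rest from y)
  and yhat^(j-1) (coordinates strictly before j from y').\<close>
definition hat_le :: "bool \<times> 'm::{finite,linorder} \<Rightarrow> real ^ (bool \<times> 'm) \<Rightarrow> real ^ (bool \<times> 'm) \<Rightarrow> real ^ (bool \<times> 'm)" where
  "hat_le j y y' = (\<chi> k. if idx_le k j then y' $ k else y $ k)"

definition hat_lt :: "bool \<times> 'm::{finite,linorder} \<Rightarrow> real ^ (bool \<times> 'm) \<Rightarrow> real ^ (bool \<times> 'm) \<Rightarrow> real ^ (bool \<times> 'm)" where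
  "hat_lt j y y' = (\<chi> k. if idx_lt k j then y' $ k else y $ k)"

definition coord_incr_dg :: "(real ^ (bool \<times> 'm::{finite,linorder}) \<Rightarrow> real) \<Rightarrow> real ^ (bool \<times> 'm) \<Rightarrow> real ^ (bool \<times> 'm) \<Rightarrow> real ^ (bool \<times> 'm)" where
  "coord_incr_dg H y y' = (\<chi> j. if y' $ j = y $ j then partial j H (hat_le j y y')
      else (H (hat_le j y y') - H (hat_lt j y y')) / (y' $ j - y $ j))"

definition Rmat :: "(real ^ (bool \<times> 'm::{finite,linorder}) \<Rightarrow> real) \<Rightarrow> real ^ (bool \<times> 'm) \<Rightarrow> real ^ (bool \<times> 'm) ^ (bool \<times> 'm)" where
  "Rmat H y = (\<chi> j k. if idx_lt k j then hess H y $ j $ k else if k = j then 0 else - (hess H y $ j $ k))"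

definition theta :: "(real ^ (bool \<times> 'm::{finite,linorder}) \<Rightarrow> real) \<Rightarrow> real ^ (bool \<times> 'm) \<Rightarrow> real \<Rightarrow> real ^ (bool \<times> 'm) ^ (bool \<times> 'm)" where
  "theta H ybar h = 2 *\<^sub>R matrix_inv (symp ** Rmat H ybar
       + (symp ** hess H ybar) ** mat_coth ((h / 2) *\<^sub>R (symp ** hess H ybar)))"

text \<open>Scheme residual in the deviation variables nu = y - ybar:
  G(nu_n, nu_{n+1}) = nu_{n+1} - nu_n - theta S DG(ybar+nu_n, ybar+nu_{n+1}), theta frozen at ybar.\<close>
definition scheme_resid :: "(real ^ (bool \<times> 'm::{finite,linorder}) \<Rightarrow> real) \<Rightarrow> real ^ (bool \<times> 'm) \<Rightarrow> real \<Rightarrow> (real ^ (bool \<times> 'm)) \<times> (real ^ (bool \<times> 'm)) \<Rightarrow> real ^ (bool \<times> 'm)" where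
  "scheme_resid H ybar h = (\<lambda>(\<nu>, \<nu>'). \<nu>' - \<nu> - theta H ybar h *v (symp *v coord_incr_dg H (ybar + \<nu>) (ybar + \<nu>')))"

end

theory Submission
  imports Defs
begin


definition MP :: "real^'n^'n \<Rightarrow> nat \<Rightarrow> real^'n^'n" where
  "MP A k = (((**) A) ^^ k) (mat 1)"

lemma MP_0[simp]: "MP A 0 = mat 1" by (simp add: MP_def)
lemma MP_Suc: "MP A (Suc k) = A ** MP A k" by (simp add: MP_def)

lemma MP_add: "MP A (p + q) = MP A p ** MP A q"
  by (induction p) (simp_all add: MP_Suc matrix_mul_assoc)

lemma MP_scale: "MP (t *\<^sub>R A) k = (t ^ k) *\<^sub>R MP A k"
proof (induction k)
  case (Suc k)
  have "(t *\<^sub>R A) ** ((t ^ k) *\<^sub>R MP A k) = (t * t ^ k) *\<^sub>R (A ** MP A k)"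
    by (simp add: matrix_scalar_ac scalar_matrix_assoc mult.commute)
  then show ?case using Suc by (simp add: MP_Suc)
qed simp

lemma MP_bound:
  fixes A :: "real^'n^'n"
  defines "\<mu> \<equiv> (\<Sum>i\<in>UNIV. \<Sum>l\<in>UNIV. \<bar>A$i$l\<bar>) + 1"
  shows "\<bar>MP A k $ i $ j\<bar> \<le> \<mu> ^ k"
proof (induction k arbitrary: i j)
  case 0
  then show ?case by (simp add: mat_def)
next
  case (Suc k)
  have mu0: "0 \<le> \<mu> ^ k" unfolding \<mu>_def by (simp add: sum_nonneg add_nonneg_pos)
  have row: "(\<Sum>l\<in>UNIV. \<bar>A$i$l\<bar>) \<le> \<mu>"
  proof -
    have "(\<Sum>l\<in>UNIV. \<bar>A$i$l\<bar>) \<le> (\<Sum>i\<in>UNIV. \<Sum>l\<in>UNIV. \<bar>A$i$l\<bar>)"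
      by (rule member_le_sum[where f="\<lambda>i. \<Sum>l\<in>UNIV. \<bar>A$i$l\<bar>"]) (auto intro: sum_nonneg)
    then show ?thesis unfolding \<mu>_def by simp
  qed
  have "\<bar>MP A (Suc k) $ i $ j\<bar> = \<bar>\<Sum>l\<in>UNIV. A$i$l * MP A k $ l $ j\<bar>"
    by (simp add: MP_Suc matrix_matrix_mult_def)
  also have "\<dots> \<le> (\<Sum>l\<in>UNIV. \<bar>A$i$l\<bar> * \<mu> ^ k)"
    by (rule order_trans[OF sum_abs]) (auto intro!: sum_mono simp: abs_mult intro: mult_left_mono Suc)
  also have "\<dots> = (\<Sum>l\<in>UNIV. \<bar>A$i$l\<bar>) * \<mu> ^ k" by (simp add: sum_distrib_right)
  also have "\<dots> \<le> \<mu> * \<mu> ^ k" by (rule mult_right_mono[OF row mu0])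
  finally show ?case by simp
qed

lemma summable_MP:
  fixes A :: "real^'n^'n"
  shows "summable (\<lambda>k. norm ((1 / fact k) * (t ^ k * MP A k $ i $ j)))"
proof -
  define \<mu> where "\<mu> = (\<Sum>i\<in>UNIV. \<Sum>l\<in>UNIV. \<bar>A$i$l\<bar>) + 1"
  have "summable (\<lambda>k. inverse (fact k) * (\<bar>t\<bar> * \<mu>) ^ k)" by (rule summable_exp)
  then show ?thesis
  proof (rule summable_comparison_test'[where N=0])
    fix k :: nat
    have b: "\<bar>MP A k $ i $ j\<bar> \<le> \<mu> ^ k" unfolding \<mu>_def by (rule MP_bound)
    have "norm (norm ((1 / fact k) * (t ^ k * MP A k $ i $ j))) = inverse (fact k) * (\<bar>t\<bar>^k * \<bar>MP A k $ i $ j\<bar>)"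
      by (simp add: abs_mult power_abs divide_inverse)
    also have "\<dots> \<le> inverse (fact k) * (\<bar>t\<bar>^k * \<mu> ^ k)"
      by (intro mult_left_mono b) auto
    finally show "norm (norm ((1 / fact k) * (t ^ k * MP A k $ i $ j))) \<le> inverse (fact k) * (\<bar>t\<bar> * \<mu>) ^ k"
      by (simp add: power_mult_distrib)
  qed
qed

lemma suminf_mat_entry:
  fixes f :: "nat \<Rightarrow> real^'n^'m"
  assumes "\<And>i j. summable (\<lambda>k. f k $ i $ j)"
  shows "suminf f $ i $ j = (\<Sum>k. f k $ i $ j)"
proof -
  have "f sums (\<chi> i j. \<Sum>k. f k $ i $ j)"
    unfolding sums_def
  proof (rule vec_tendstoI, rule vec_tendstoI)
    fix i j
    show "((\<lambda>n. (\<Sum>k<n. f k) $ i $ j) \<longlongrightarrow> (\<chi> i j. \<Sum>k. f k $ i $ j) $ i $ j) sequentially"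
      using summable_LIMSEQ[OF assms[of i j]] by simp
  qed
  then show ?thesis by (simp add: sums_unique[symmetric])
qed

lemma mat_exp_entry:
  fixes A :: "real^'n^'n"
  shows "mat_exp (t *\<^sub>R A) $ i $ j = (\<Sum>k. (1 / fact k) * (t ^ k * MP A k $ i $ j))"
proof -
  have "mat_exp (t *\<^sub>R A) = (\<Sum>k. (1 / fact k) *\<^sub>R (t ^ k *\<^sub>R MP A k))"
    unfolding mat_exp_def using MP_scale[of t A, unfolded MP_def] by (simp add: MP_def)
  also have "\<dots> $ i $ j = (\<Sum>k. (1 / fact k) * (t ^ k * MP A k $ i $ j))"
    apply (subst suminf_mat_entry)
    subgoal for i j using summable_norm_cancel[OF summable_MP[of t A i j]] by simp
    by simp
  finally show ?thesis .
qed

lemma binom_term: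
  assumes "p \<le> n"
  shows "(1 / fact p) * (1 / fact (n - p)) = (1 / fact n) * real (n choose p)"
  using binomial_fact[OF assms, where 'a=real] by (simp add: field_simps)

lemma mat_exp_add:
  fixes A :: "real^'n^'n"
  shows "mat_exp (s *\<^sub>R A) ** mat_exp (t *\<^sub>R A) = mat_exp ((s + t) *\<^sub>R A)"
proof -
  have "(mat_exp (s *\<^sub>R A) ** mat_exp (t *\<^sub>R A)) $ i $ j = mat_exp ((s + t) *\<^sub>R A) $ i $ j" for i j
  proof -
    define a where "a l k = (1 / fact k) * (s ^ k * MP A k $ i $ l)" for l k
    define b where "b l k = (1 / fact k) * (t ^ k * MP A k $ l $ j)" for l k
    have sa: "summable (\<lambda>k. norm (a l k))" for l unfolding a_def by (rule summable_MP)
    have sb: "summable (\<lambda>k. norm (b l k))" for l unfolding b_def by (rule summable_MP)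
    have "(mat_exp (s *\<^sub>R A) ** mat_exp (t *\<^sub>R A)) $ i $ j = (\<Sum>l\<in>UNIV. (\<Sum>k. a l k) * (\<Sum>k. b l k))"
      by (simp add: matrix_matrix_mult_def mat_exp_entry a_def b_def)
    also have "\<dots> = (\<Sum>l\<in>UNIV. \<Sum>n. \<Sum>p\<le>n. a l p * b l (n - p))"
      by (simp add: Cauchy_product[OF sa sb])
    also have "\<dots> = (\<Sum>n. \<Sum>l\<in>UNIV. \<Sum>p\<le>n. a l p * b l (n - p))"
      by (rule suminf_sum[symmetric]) (rule sums_summable[OF Cauchy_product_sums[OF sa sb]])
    also have "\<dots> = (\<Sum>n. (1 / fact n) * ((s + t) ^ n * MP A n $ i $ j))"
    proof (rule arg_cong[where f=suminf], rule ext)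
      fix n
      have "(\<Sum>l\<in>UNIV. \<Sum>p\<le>n. a l p * b l (n - p))
          = (\<Sum>p\<le>n. (1 / fact p) * (1 / fact (n - p)) * (s ^ p * t ^ (n - p)) *
               (\<Sum>l\<in>UNIV. MP A p $ i $ l * MP A (n - p) $ l $ j))"
        unfolding a_def b_def by (subst sum.swap) (simp add: sum_distrib_left mult_ac)
      also have "\<dots> = (\<Sum>p\<le>n. (1 / fact n) * (real (n choose p) * s ^ p * t ^ (n - p)) * MP A n $ i $ j)"
      proof (rule sum.cong[OF refl])
        fix p assume "p \<in> {..n}"
        then have pn: "p \<le> n" by simp
        have "(\<Sum>l\<in>UNIV. MP A p $ i $ l * MP A (n - p) $ l $ j) = (MP A p ** MP A (n - p)) $ i $ j"
          by (simp add: matrix_matrix_mult_def)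
        also have "\<dots> = MP A n $ i $ j" using pn by (simp add: MP_add[symmetric])
        finally show "(1 / fact p) * (1 / fact (n - p)) * (s ^ p * t ^ (n - p)) *
               (\<Sum>l\<in>UNIV. MP A p $ i $ l * MP A (n - p) $ l $ j) =
             (1 / fact n) * (real (n choose p) * s ^ p * t ^ (n - p)) * MP A n $ i $ j"
          using binom_term[OF pn] by simp
      qed
      also have "\<dots> = (1 / fact n) * ((s + t) ^ n * MP A n $ i $ j)"
        by (simp add: binomial_ring sum_distrib_left sum_distrib_right mult_ac)
      finally show "(\<Sum>l\<in>UNIV. \<Sum>p\<le>n. a l p * b l (n - p)) = (1 / fact n) * ((s + t) ^ n * MP A n $ i $ j)" .
    qed
    also have "\<dots> = mat_exp ((s + t) *\<^sub>R A) $ i $ j" by (simp add: mat_exp_entry)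
    finally show ?thesis .
  qed
  then show ?thesis by (simp add: vec_eq_iff)
qed

lemma mat_exp_zero: "mat_exp (0 *\<^sub>R (A::real^'n^'n)) = mat 1"
proof -
  have "mat_exp (0 *\<^sub>R A) $ i $ j = mat 1 $ i $ j" for i j
  proof -
    have e: "(\<lambda>k. (1 / fact k) * (0 ^ k * MP A k $ i $ j)) = (\<lambda>k. if k = 0 then mat 1 $ i $ j else 0)"
      by (auto simp: power_0_left)
    have "(\<lambda>k. (1 / fact k) * (0 ^ k * MP A k $ i $ j)) sums (mat 1 $ i $ j)"
      unfolding e by (rule sums_single)
    then show ?thesis unfolding mat_exp_entry by (rule sums_unique[symmetric])
  qed
  then show ?thesis by (simp add: vec_eq_iff)
qed



lemma deriv_axis:
  fixes f :: "real^'n \<Rightarrow> real"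
  assumes "\<And>y. (\<lambda>t. f (y + t *\<^sub>R axis i 1)) differentiable (at 0)"
  shows "((\<lambda>t. f (w + t *\<^sub>R axis i 1)) has_real_derivative partial i f (w + r *\<^sub>R axis i 1)) (at r)"
proof -
  let ?y = "w + r *\<^sub>R axis i 1"
  have "((\<lambda>t. f (?y + t *\<^sub>R axis i 1)) has_real_derivative partial i f ?y) (at 0)"
    using assms[of ?y] unfolding partial_def by (simp add: DERIV_deriv_iff_real_differentiable)
  moreover have "(\<lambda>t. f (?y + t *\<^sub>R axis i 1)) = (\<lambda>t. f (w + (t + r) *\<^sub>R axis i 1))"
    by (simp add: algebra_simps)
  ultimately have "((\<lambda>t. f (w + (t + r) *\<^sub>R axis i 1)) has_real_derivative partial i f ?y) (at 0)"
    by simp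
  then show ?thesis using DERIV_shift[of "\<lambda>t. f (w + t *\<^sub>R axis i 1)" _ 0 r] by simp
qed

lemma mvt_gen:
  fixes \<phi> :: "real \<Rightarrow> real"
  assumes "\<And>r. (\<phi> has_real_derivative \<phi>' r) (at r)"
  shows "\<exists>\<xi>. min a b \<le> \<xi> \<and> \<xi> \<le> max a b \<and> \<phi> b - \<phi> a = (b - a) * \<phi>' \<xi>"
proof (cases a b rule: linorder_cases)
  case less
  then obtain z where "a < z" "z < b" "\<phi> b - \<phi> a = (b - a) * \<phi>' z"
    using MVT2[of a b \<phi> \<phi>'] assms by blast
  then show ?thesis using less by (intro exI[of _ z]) auto
next
  case equal
  then show ?thesis by (intro exI[of _ a]) auto
next
  case greater
  then obtain z where "b < z" "z < a" "\<phi> a - \<phi> b = (a - b) * \<phi>' z"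
    using MVT2[of b a \<phi> \<phi>'] assms by blast
  then show ?thesis using greater by (intro exI[of _ z]) (auto simp: algebra_simps)
qed

lemma psum_comp:
  "(\<Sum>i\<in>S. (v$i) *\<^sub>R axis i (1::real)) $ k = (if k \<in> S then v$k else 0)" if "finite S"
  using that by (simp add: axis_def if_distrib[where f="\<lambda>x. _ * x"] sum.delta cong: if_cong)

lemma fd_lemma:
  fixes f :: "real^'n \<Rightarrow> real"
  assumes D: "\<And>i y. (\<lambda>t. f (y + t *\<^sub>R axis i 1)) differentiable (at 0)"
    and C: "\<And>i. isCont (partial i f) x0"
    and e: "\<epsilon> > 0"
  shows "\<exists>\<delta>>0. \<forall>v. norm v < \<delta> \<longrightarrow>
           \<bar>f (x0 + v) - f x0 - (\<Sum>i\<in>UNIV. partial i f x0 * v$i)\<bar> \<le> \<epsilon> * norm v"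
proof -
  define \<epsilon>' where "\<epsilon>' = \<epsilon> / real CARD('n)"
  have e': "\<epsilon>' > 0" unfolding \<epsilon>'_def using e by simp
  have "\<forall>\<^sub>F w in at x0. \<forall>i. dist (partial i f w) (partial i f x0) < \<epsilon>'"
    by (rule eventually_all_finite) (rule tendstoD[OF C[unfolded isCont_def] e'])
  then obtain \<delta> where d: "\<delta> > 0"
    and dP: "\<And>w. w \<noteq> x0 \<Longrightarrow> dist w x0 < \<delta> \<Longrightarrow> \<forall>i. dist (partial i f w) (partial i f x0) < \<epsilon>'"
    unfolding eventually_at by auto
  have P: "\<bar>partial i f w - partial i f x0\<bar> \<le> \<epsilon>'" if "norm (w - x0) < \<delta>" for w i
    using dP[of w] that e' by (cases "w = x0") (auto simp: dist_norm less_imp_le)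
  have main: "\<bar>f (x0 + (\<Sum>i\<in>S. (v$i) *\<^sub>R axis i 1)) - f x0 - (\<Sum>i\<in>S. partial i f x0 * v$i)\<bar>
        \<le> \<epsilon>' * (\<Sum>i\<in>S. \<bar>v$i\<bar>)" if nv: "norm v < \<delta>" for v :: "real^'n" and S
  proof -
    have "finite S" by simp
    then show ?thesis
    proof (induction S rule: finite_induct)
      case empty
      then show ?case by simp
    next
      case (insert i S)
      define p where "p = (\<Sum>i\<in>S. (v$i) *\<^sub>R axis i (1::real))"
      have der: "((\<lambda>t. f (x0 + p + t *\<^sub>R axis i 1)) has_real_derivative partial i f (x0 + p + r *\<^sub>R axis i 1)) (at r)" for r
        by (rule deriv_axis[OF D])
      obtain \<xi> where xi: "min 0 (v$i) \<le> \<xi>" "\<xi> \<le> max 0 (v$i)"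
        and mv: "f (x0 + p + (v$i) *\<^sub>R axis i 1) - f (x0 + p + 0 *\<^sub>R axis i 1) = (v$i - 0) * partial i f (x0 + p + \<xi> *\<^sub>R axis i 1)"
        using mvt_gen[OF der, of 0 "v$i"] by blast
      have "norm ((x0 + p + \<xi> *\<^sub>R axis i 1) - x0) \<le> norm v"
      proof (rule norm_le_componentwise_cart)
        fix k
        show "norm (((x0 + p + \<xi> *\<^sub>R axis i 1) - x0) $ k) \<le> norm (v $ k)"
        proof -
          have pk: "p $ k = (if k \<in> S then v$k else 0)" unfolding p_def by (rule psum_comp[OF insert(1)])
          have "((x0 + p + \<xi> *\<^sub>R axis i 1) - x0) $ k = p $ k + \<xi> * axis i 1 $ k" by simp
          then show ?thesis using xi insert(2) pk by (auto simp: axis_def)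
        qed
      qed
      then have "\<bar>partial i f (x0 + p + \<xi> *\<^sub>R axis i 1) - partial i f x0\<bar> \<le> \<epsilon>'"
        using nv by (intro P) simp
      then have gq: "\<bar>v$i\<bar> * \<bar>partial i f (x0 + p + \<xi> *\<^sub>R axis i 1) - partial i f x0\<bar> \<le> \<bar>v$i\<bar> * \<epsilon>'"
        by (rule mult_left_mono) simp
      have mv': "f (x0 + p + (v$i) *\<^sub>R axis i 1) - f (x0 + p) = v$i * partial i f (x0 + p + \<xi> *\<^sub>R axis i 1)"
        using mv by simp
      have "\<bar>v$i * partial i f (x0 + p + \<xi> *\<^sub>R axis i 1) - partial i f x0 * v$i\<bar>
          = \<bar>v$i\<bar> * \<bar>partial i f (x0 + p + \<xi> *\<^sub>R axis i 1) - partial i f x0\<bar>"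
        by (simp add: abs_mult[symmetric] algebra_simps)
      with gq mv' have step: "\<bar>f (x0 + p + (v$i) *\<^sub>R axis i 1) - f (x0 + p) - partial i f x0 * v$i\<bar> \<le> \<epsilon>' * \<bar>v$i\<bar>"
        by (simp add: mult.commute)
      have pe: "x0 + (\<Sum>i\<in>insert i S. (v$i) *\<^sub>R axis i 1) = x0 + p + (v$i) *\<^sub>R axis i 1"
        using insert(1,2) unfolding p_def by (simp add: algebra_simps)
      have s1: "(\<Sum>i\<in>insert i S. partial i f x0 * v$i) = partial i f x0 * v$i + (\<Sum>i\<in>S. partial i f x0 * v$i)"
        using insert(1,2) by simp
      have s2: "(\<Sum>i\<in>insert i S. \<bar>v$i\<bar>) = \<bar>v$i\<bar> + (\<Sum>i\<in>S. \<bar>v$i\<bar>)"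
        using insert(1,2) by simp
      have IH: "\<bar>f (x0 + p) - f x0 - (\<Sum>i\<in>S. partial i f x0 * v$i)\<bar> \<le> \<epsilon>' * (\<Sum>i\<in>S. \<bar>v$i\<bar>)"
        using insert.IH unfolding p_def .
      show ?case unfolding pe s1 s2 distrib_left
        using IH step abs_triangle_ineq[of "f (x0 + p) - f x0 - (\<Sum>i\<in>S. partial i f x0 * v$i)"
            "f (x0 + p + (v$i) *\<^sub>R axis i 1) - f (x0 + p) - partial i f x0 * v$i"]
        by linarith
    qed
  qed
  show ?thesis
  proof (intro exI[of _ \<delta>] conjI allI impI d)
    fix v :: "real^'n" assume nv: "norm v < \<delta>"
    have vs: "(\<Sum>i\<in>UNIV. (v$i) *\<^sub>R axis i (1::real)) = v"
      unfolding vec_eq_iff using psum_comp[of "UNIV::'n set" v] by simp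
    have "(\<Sum>i\<in>UNIV. \<bar>v$i\<bar>) \<le> (\<Sum>i\<in>(UNIV::'n set). norm v)"
      by (rule sum_mono) (rule component_le_norm_cart)
    then have "\<epsilon>' * (\<Sum>i\<in>UNIV. \<bar>v$i\<bar>) \<le> \<epsilon> * norm v"
      using e' e unfolding \<epsilon>'_def by (simp add: field_simps)
    with main[OF nv, of UNIV] vs show "\<bar>f (x0 + v) - f x0 - (\<Sum>i\<in>UNIV. partial i f x0 * v$i)\<bar> \<le> \<epsilon> * norm v"
      by simp
  qed
qed

lemma smooth_D: "smooth H \<Longrightarrow> (\<lambda>t. iter_partial ps H (y + t *\<^sub>R axis i 1)) differentiable (at 0)"
  unfolding smooth_def by blast

lemma smooth_C: "smooth H \<Longrightarrow> isCont (iter_partial ps H) x"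
  unfolding smooth_def by (metis continuous_on_eq_continuous_at open_UNIV UNIV_I)

lemma isCont_delta:
  fixes g :: "'a::real_normed_vector \<Rightarrow> real"
  assumes "isCont g y" "\<epsilon> > 0"
  shows "\<exists>\<delta>>0. \<forall>w. norm (w - y) < \<delta> \<longrightarrow> \<bar>g w - g y\<bar> < \<epsilon>"
proof -
  have "\<forall>\<^sub>F w in at y. dist (g w) (g y) < \<epsilon>"
    by (rule tendstoD[OF assms(1)[unfolded isCont_def] assms(2)])
  then obtain \<delta> where "\<delta> > 0" "\<And>w. w \<noteq> y \<Longrightarrow> dist w y < \<delta> \<Longrightarrow> dist (g w) (g y) < \<epsilon>"
    unfolding eventually_at by auto
  then show ?thesis using assms(2)
    by (intro exI[of _ \<delta>]) (metis dist_norm dist_real_def diff_self abs_zero)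
qed

lemma schwarz_aux:
  fixes H :: "real^'n \<Rightarrow> real"
  assumes sm: "smooth H" and d: "d > 0"
    and cl: "\<And>w. norm (w - y) \<le> 2 * d \<Longrightarrow> \<bar>partial k (partial j H) w - c\<bar> \<le> \<epsilon>"
  shows "\<bar>(H (y + d *\<^sub>R axis k 1 + d *\<^sub>R axis j 1) - H (y + d *\<^sub>R axis j 1)
            - H (y + d *\<^sub>R axis k 1) + H y) - d^2 * c\<bar> \<le> d^2 * \<epsilon>"
proof -
  define g where "g = partial j H"
  have DH: "\<And>i y. (\<lambda>t. H (y + t *\<^sub>R axis i 1)) differentiable (at 0)"
    using smooth_D[OF sm, where ps="[]"] by simp
  have Dg: "\<And>i y. (\<lambda>t. g (y + t *\<^sub>R axis i 1)) differentiable (at 0)"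
    using smooth_D[OF sm, where ps="[j]"] by (simp add: g_def)
  define u where "u x = H (y + d *\<^sub>R axis k 1 + x *\<^sub>R axis j 1) - H (y + x *\<^sub>R axis j 1)" for x
  have du: "(u has_real_derivative (g (y + d *\<^sub>R axis k 1 + x *\<^sub>R axis j 1) - g (y + x *\<^sub>R axis j 1))) (at x)" for x
    unfolding u_def g_def
    by (intro DERIV_diff deriv_axis[OF DH])
  obtain \<xi> where xi: "min 0 d \<le> \<xi>" "\<xi> \<le> max 0 d"
    and mu: "u d - u 0 = (d - 0) * (g (y + d *\<^sub>R axis k 1 + \<xi> *\<^sub>R axis j 1) - g (y + \<xi> *\<^sub>R axis j 1))"
    using mvt_gen[OF du, of 0 d] by blast
  define v where "v t = g (y + \<xi> *\<^sub>R axis j 1 + t *\<^sub>R axis k 1)" for t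
  have dv: "(v has_real_derivative partial k g (y + \<xi> *\<^sub>R axis j 1 + t *\<^sub>R axis k 1)) (at t)" for t
    unfolding v_def by (rule deriv_axis[OF Dg])
  obtain \<eta> where eta: "min 0 d \<le> \<eta>" "\<eta> \<le> max 0 d"
    and mv: "v d - v 0 = (d - 0) * partial k g (y + \<xi> *\<^sub>R axis j 1 + \<eta> *\<^sub>R axis k 1)"
    using mvt_gen[OF dv, of 0 d] by blast
  define m where "m = partial k g (y + \<xi> *\<^sub>R axis j 1 + \<eta> *\<^sub>R axis k 1)"
  have "norm ((y + \<xi> *\<^sub>R axis j 1 + \<eta> *\<^sub>R axis k 1) - y) \<le> norm (\<xi> *\<^sub>R axis j (1::real)) + norm (\<eta> *\<^sub>R axis k (1::real))"
    by (simp add: order_trans[OF norm_triangle_ineq])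
  also have "\<dots> \<le> 2 * d" using xi eta d by simp
  finally have "\<bar>m - c\<bar> \<le> \<epsilon>" unfolding m_def g_def by (rule cl)
  have e1: "g (y + d *\<^sub>R axis k 1 + \<xi> *\<^sub>R axis j 1) = v d" unfolding v_def by (simp add: algebra_simps)
  have e2: "g (y + \<xi> *\<^sub>R axis j 1) = v 0" unfolding v_def by simp
  have "H (y + d *\<^sub>R axis k 1 + d *\<^sub>R axis j 1) - H (y + d *\<^sub>R axis j 1)
            - H (y + d *\<^sub>R axis k 1) + H y = u d - u 0" unfolding u_def by simp
  also have "\<dots> = d^2 * m" using mu mv unfolding e1 e2 m_def by (simp add: power2_eq_square)
  finally have "\<bar>(H (y + d *\<^sub>R axis k 1 + d *\<^sub>R axis j 1) - H (y + d *\<^sub>R axis j 1)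
            - H (y + d *\<^sub>R axis k 1) + H y) - d^2 * c\<bar> = d^2 * \<bar>m - c\<bar>"
    by (simp add: right_diff_distrib[symmetric] abs_mult)
  also have "\<dots> \<le> d^2 * \<epsilon>" using \<open>\<bar>m - c\<bar> \<le> \<epsilon>\<close> by (simp add: mult_left_mono)
  finally show ?thesis .
qed

lemma schwarz:
  fixes H :: "real^'n \<Rightarrow> real"
  assumes sm: "smooth H"
  shows "partial j (partial k H) y = partial k (partial j H) y"
proof -
  define c1 where "c1 = partial k (partial j H) y"
  define c2 where "c2 = partial j (partial k H) y"
  have "\<bar>c1 - c2\<bar> \<le> 2 * \<epsilon>" if e: "\<epsilon> > 0" for \<epsilon>
  proof -
    have C1: "isCont (partial k (partial j H)) y" using smooth_C[OF sm, where ps="[k,j]"] by simp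
    have C2: "isCont (partial j (partial k H)) y" using smooth_C[OF sm, where ps="[j,k]"] by simp
    obtain \<delta>1 where d1: "\<delta>1 > 0" "\<And>w. norm (w - y) < \<delta>1 \<Longrightarrow> \<bar>partial k (partial j H) w - c1\<bar> < \<epsilon>"
      using isCont_delta[OF C1 e] unfolding c1_def by blast
    obtain \<delta>2 where d2: "\<delta>2 > 0" "\<And>w. norm (w - y) < \<delta>2 \<Longrightarrow> \<bar>partial j (partial k H) w - c2\<bar> < \<epsilon>"
      using isCont_delta[OF C2 e] unfolding c2_def by blast
    define d where "d = min \<delta>1 \<delta>2 / 3"
    have d0: "d > 0" using d1 d2 by (simp add: d_def)
    have a1: "\<bar>(H (y + d *\<^sub>R axis k 1 + d *\<^sub>R axis j 1) - H (y + d *\<^sub>R axis j 1)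
            - H (y + d *\<^sub>R axis k 1) + H y) - d^2 * c1\<bar> \<le> d^2 * \<epsilon>"
      by (rule schwarz_aux[OF sm d0]) (rule less_imp_le, rule d1(2), insert d1(1) d2(1), auto simp: d_def min_def split: if_splits)
    have a2: "\<bar>(H (y + d *\<^sub>R axis j 1 + d *\<^sub>R axis k 1) - H (y + d *\<^sub>R axis k 1)
            - H (y + d *\<^sub>R axis j 1) + H y) - d^2 * c2\<bar> \<le> d^2 * \<epsilon>"
      by (rule schwarz_aux[OF sm d0]) (rule less_imp_le, rule d2(2), insert d1(1) d2(1), auto simp: d_def min_def split: if_splits)
    have sw: "y + d *\<^sub>R axis j 1 + d *\<^sub>R axis k 1 = y + d *\<^sub>R axis k 1 + d *\<^sub>R axis j (1::real)"
      by (simp add: algebra_simps)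
    have eq: "d^2 * \<bar>c1 - c2\<bar> = \<bar>d^2 * c1 - d^2 * c2\<bar>" by (simp add: abs_mult right_diff_distrib[symmetric])
    have "d^2 * \<bar>c1 - c2\<bar> \<le> d^2 * (2 * \<epsilon>)"
      using a1 a2 unfolding sw eq abs_le_iff by linarith
    then show ?thesis using d0 by simp
  qed
  then have "c1 = c2"
  proof -
    assume H: "\<And>\<epsilon>. \<epsilon> > 0 \<Longrightarrow> \<bar>c1 - c2\<bar> \<le> 2 * \<epsilon>"
    show "c1 = c2"
    proof (rule ccontr)
      assume "c1 \<noteq> c2"
      then have "\<bar>c1 - c2\<bar> / 4 > 0" by simp
      from H[OF this] \<open>c1 \<noteq> c2\<close> show False by simp
    qed
  qed
  then show ?thesis unfolding c1_def c2_def by simp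
qed



definition midv :: "bool \<times> 'm::{finite,linorder} \<Rightarrow> real^(bool \<times> 'm) \<Rightarrow> real^(bool \<times> 'm) \<Rightarrow> real^(bool \<times> 'm)" where
  "midv j \<nu> \<nu>' = (\<chi> k. if idx_lt k j then \<nu>'$k else if k = j then (\<nu>$k + \<nu>'$k) / 2 else \<nu>$k)"

lemma idx_lt_irrefl[simp]: "\<not> idx_lt j j" by (simp add: idx_lt_def)

lemma norm_sq_vec: "(norm (x::real^'n))^2 = (\<Sum>k\<in>UNIV. (x$k)^2)"
  by (simp add: norm_vec_def L2_set_def sum_nonneg)

lemma hat_le_self: "hat_le j y y = y" by (simp add: hat_le_def vec_eq_iff)

lemma dg_comp_deriv:
  fixes H :: "real^(bool \<times> 'm::{finite,linorder}) \<Rightarrow> real"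
  assumes sm: "smooth H"
  shows "((\<lambda>p. coord_incr_dg H (ybar + fst p) (ybar + snd p) $ j) has_derivative
          (\<lambda>p. \<Sum>k\<in>UNIV. partial k (partial j H) ybar * midv j (fst p) (snd p) $ k)) (at (0, 0))"
proof -
  define c where "c k = partial k (partial j H) ybar" for k
  define g where "g = partial j H"
  define e where "e = axis j (1::real)"
  have lin: "bounded_linear (\<lambda>p. \<Sum>k\<in>UNIV. c k * midv j (fst p) (snd p) $ k)"
    unfolding linear_conv_bounded_linear[symmetric]
    apply (rule linearI)
     apply (simp add: midv_def sum.distrib[symmetric] split_beta)
     apply (rule sum.cong, simp, auto simp: algebra_simps add_divide_distrib)[1]
    apply (simp add: midv_def sum_distrib_left split_beta)
    apply (rule sum.cong, simp, auto simp: algebra_simps)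
    done
  have DH: "\<And>i y. (\<lambda>t. H (y + t *\<^sub>R axis i 1)) differentiable (at 0)"
    using smooth_D[OF sm, where ps="[]"] by simp
  have Dg: "\<And>i y. (\<lambda>t. g (y + t *\<^sub>R axis i 1)) differentiable (at 0)"
    using smooth_D[OF sm, where ps="[j]"] by (simp add: g_def)
  have Cg: "\<And>i. isCont (partial i g) ybar"
    using smooth_C[OF sm, where ps="[i,j]" for i] by (simp add: g_def)
  have main: "\<exists>d>0. \<forall>p. norm p < d \<longrightarrow>
      \<bar>coord_incr_dg H (ybar + fst p) (ybar + snd p) $ j - g ybar - (\<Sum>k\<in>UNIV. c k * midv j (fst p) (snd p) $ k)\<bar>
        \<le> \<epsilon> * norm p" if eps: "\<epsilon> > 0" for \<epsilon>
  proof -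
    obtain \<delta> where d: "\<delta> > 0" and fd: "\<And>v. norm v < \<delta> \<Longrightarrow>
        \<bar>g (ybar + v) - g ybar - (\<Sum>i\<in>UNIV. c i * v$i)\<bar> \<le> \<epsilon> * norm v"
      using fd_lemma[OF Dg Cg eps] unfolding c_def g_def by blast
    show ?thesis
    proof (intro exI[of _ \<delta>] conjI allI impI d)
      fix p :: "(real^(bool \<times> 'm)) \<times> (real^(bool \<times> 'm))"
      assume np: "norm p < \<delta>"
      define \<nu> where "\<nu> = fst p"
      define \<nu>' where "\<nu>' = snd p"
      define s where "s = \<nu>$j"
      define t where "t = \<nu>'$j"
      define w where "w = (\<chi> k. if idx_lt k j then \<nu>'$k else if k = j then 0 else \<nu>$k)"
      define z where "z = ybar + w"
      define \<alpha> where "\<alpha> = (\<Sum>k\<in>UNIV. c k * w$k)"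
      have hle: "hat_le j (ybar + \<nu>) (ybar + \<nu>') = z + t *\<^sub>R e"
        by (auto simp: vec_eq_iff hat_le_def idx_le_def z_def w_def t_def e_def axis_def)
      have hlt: "hat_lt j (ybar + \<nu>) (ybar + \<nu>') = z + s *\<^sub>R e"
        by (auto simp: vec_eq_iff hat_lt_def z_def w_def s_def e_def axis_def)
      have csum: "(\<Sum>k\<in>UNIV. c k * (w + r *\<^sub>R e)$k) = \<alpha> + c j * r" for r
        by (simp add: \<alpha>_def e_def axis_def algebra_simps sum.distrib if_distrib[where f="\<lambda>x. _ * x"] cong: if_cong)
      have mid: "midv j \<nu> \<nu>' = w + ((s + t) / 2) *\<^sub>R e"
        by (auto simp: vec_eq_iff midv_def w_def s_def t_def e_def axis_def)
      have Lp: "(\<Sum>k\<in>UNIV. c k * midv j \<nu> \<nu>' $ k) = \<alpha> + c j * ((s + t) / 2)"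
        unfolding mid csum ..
      have key: "\<exists>\<xi>. min s t \<le> \<xi> \<and> \<xi> \<le> max s t \<and>
          coord_incr_dg H (ybar + \<nu>) (ybar + \<nu>') $ j - g ybar - (\<alpha> + c j * ((s + t) / 2))
            = g (ybar + (w + \<xi> *\<^sub>R e)) - g ybar - (\<alpha> + c j * \<xi>)"
      proof (cases "s = t")
        case True
        then show ?thesis
          by (intro exI[of _ t]) (simp add: coord_incr_dg_def hle g_def z_def s_def t_def add.assoc)
      next
        case False
        define K where "K = g ybar + \<alpha>"
        define Q where "Q r = H (z + r *\<^sub>R e) - K * r - c j * (r^2 / 2)" for r
        have dH: "((\<lambda>r. H (z + r *\<^sub>R e)) has_real_derivative g (z + r *\<^sub>R e)) (at r)" for r
          unfolding e_def g_def by (rule deriv_axis[OF DH])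
        have dQ: "(Q has_real_derivative (g (z + r *\<^sub>R e) - K - c j * r)) (at r)" for r
          unfolding Q_def by (auto intro!: derivative_eq_intros dH)
        obtain \<xi> where xi: "min s t \<le> \<xi>" "\<xi> \<le> max s t"
          and mv: "Q t - Q s = (t - s) * (g (z + \<xi> *\<^sub>R e) - K - c j * \<xi>)"
          using mvt_gen[OF dQ, of s t] by blast
        have ts: "t - s \<noteq> 0" using False by simp
        have "coord_incr_dg H (ybar + \<nu>) (ybar + \<nu>') $ j = (H (z + t *\<^sub>R e) - H (z + s *\<^sub>R e)) / (t - s)"
          using False by (simp add: coord_incr_dg_def hle hlt s_def t_def)
        also have "H (z + t *\<^sub>R e) - H (z + s *\<^sub>R e) = (Q t - Q s) + K * (t - s) + c j * ((t^2 - s^2) / 2)"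
          unfolding Q_def by (simp add: field_simps)
        also have "\<dots> = (t - s) * (g (z + \<xi> *\<^sub>R e) - K - c j * \<xi> + K + c j * ((s + t) / 2))"
          unfolding mv by (simp add: algebra_simps power2_eq_square)
        finally have "coord_incr_dg H (ybar + \<nu>) (ybar + \<nu>') $ j = g (z + \<xi> *\<^sub>R e) - c j * \<xi> + c j * ((s + t) / 2)"
          using ts by simp
        then show ?thesis using xi
          by (intro exI[of _ \<xi>]) (simp add: z_def K_def add.assoc algebra_simps)
      qed
      then obtain \<xi> where xi: "min s t \<le> \<xi>" "\<xi> \<le> max s t"
        and eq: "coord_incr_dg H (ybar + \<nu>) (ybar + \<nu>') $ j - g ybar - (\<alpha> + c j * ((s + t) / 2))
            = g (ybar + (w + \<xi> *\<^sub>R e)) - g ybar - (\<alpha> + c j * \<xi>)" by blast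
      have "(norm (w + \<xi> *\<^sub>R e))^2 \<le> (norm p)^2"
      proof -
        have "(norm (w + \<xi> *\<^sub>R e))^2 = (\<Sum>k\<in>UNIV. ((w + \<xi> *\<^sub>R e)$k)^2)" by (rule norm_sq_vec)
        also have "\<dots> \<le> (\<Sum>k\<in>UNIV. (\<nu>$k)^2 + (\<nu>'$k)^2)"
        proof (rule sum_mono)
          fix k
          have x2: "\<xi>^2 \<le> s^2 + t^2"
          proof -
            have "\<bar>\<xi>\<bar> \<le> max \<bar>s\<bar> \<bar>t\<bar>" using xi by (auto simp: min_def max_def split: if_splits)
            then have "\<xi>^2 \<le> (max \<bar>s\<bar> \<bar>t\<bar>)^2" by (metis abs_ge_zero order.trans power2_abs power_mono)
            also have "\<dots> \<le> s^2 + t^2" by (auto simp: max_def)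
            finally show ?thesis .
          qed
          show "((w + \<xi> *\<^sub>R e)$k)^2 \<le> (\<nu>$k)^2 + (\<nu>'$k)^2"
            using x2 by (auto simp: w_def e_def axis_def s_def t_def)
        qed
        also have "\<dots> = (norm \<nu>)^2 + (norm \<nu>')^2" by (simp add: norm_sq_vec sum.distrib)
        also have "\<dots> = (norm p)^2" by (cases p) (simp add: \<nu>_def \<nu>'_def norm_Pair)
        finally show ?thesis .
      qed
      then have nw: "norm (w + \<xi> *\<^sub>R e) \<le> norm p" by (rule power2_le_imp_le) simp
      have "\<bar>g (ybar + (w + \<xi> *\<^sub>R e)) - g ybar - (\<alpha> + c j * \<xi>)\<bar> \<le> \<epsilon> * norm (w + \<xi> *\<^sub>R e)"
        using fd[of "w + \<xi> *\<^sub>R e"] nw np unfolding csum by simp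
      also have "\<dots> \<le> \<epsilon> * norm p" using nw eps by simp
      finally show "\<bar>coord_incr_dg H (ybar + fst p) (ybar + snd p) $ j - g ybar - (\<Sum>k\<in>UNIV. c k * midv j (fst p) (snd p) $ k)\<bar>
        \<le> \<epsilon> * norm p"
        using eq unfolding \<nu>_def[symmetric] \<nu>'_def[symmetric] Lp by simp
    qed
  qed
  have f0: "coord_incr_dg H ybar ybar $ j = g ybar"
    by (simp add: coord_incr_dg_def hat_le_self g_def)
  show ?thesis
    unfolding has_derivative_at_alt c_def[symmetric]
    using lin main by (simp add: f0 zero_prod_def[symmetric])
qed



lemma scaleR_mat_vec: "((c::real) *\<^sub>R A) *v x = c *\<^sub>R (A *v (x::real^'n))"
  by (simp add: vec_eq_iff matrix_vector_mult_def sum_distrib_left mult.assoc)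

lemma matrix_add_rdistrib: "((A + B) ** C) = (A ** C) + (B ** (C::real^'n^'n))"
  by (simp add: vec_eq_iff matrix_matrix_mult_def sum.distrib algebra_simps)
lemma matrix_diff_rdistrib: "((A - B) ** C) = (A ** C) - (B ** (C::real^'n^'n))"
  by (simp add: vec_eq_iff matrix_matrix_mult_def sum_subtractf algebra_simps)
lemma matrix_diff_ldistrib: "(C ** (A - B)) = (C ** A) - (C ** (B::real^'n^'n))"
  by (simp add: vec_eq_iff matrix_matrix_mult_def sum_subtractf algebra_simps)
lemma scalar_matrix_assoc': "(k *\<^sub>R A) ** B = k *\<^sub>R (A ** (B::real^'n^'n))"
  by (simp add: scalar_matrix_assoc)

lemma inv_props:
  fixes M :: "real^'n^'n"
  assumes "invertible M"
  shows "M ** matrix_inv M = mat 1" "matrix_inv M ** M = mat 1"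
proof -
  have "\<exists>M'. M ** M' = mat 1 \<and> M' ** M = mat 1" using assms unfolding invertible_def by blast
  then have "M ** matrix_inv M = mat 1 \<and> matrix_inv M ** M = mat 1"
    unfolding matrix_inv_def by (rule someI_ex)
  then show "M ** matrix_inv M = mat 1" "matrix_inv M ** M = mat 1" by auto
qed

lemma inv_cancel:
  fixes M :: "real^'n^'n"
  assumes "invertible M"
  shows "M *v x = M *v y \<longleftrightarrow> x = y"
  using inj_matrix_vector_mult[OF assms] by (auto dest: injD)

lemma inv_solve:
  fixes M :: "real^'n^'n"
  assumes "invertible M"
  shows "x = matrix_inv M *v y \<longleftrightarrow> M *v x = y"
proof -
  have "M *v (matrix_inv M *v y) = y"
    by (simp add: matrix_vector_mul_assoc inv_props[OF assms])
  then show ?thesis using inv_cancel[OF assms] by metis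
qed

lemma vec_id: "(1/2::real) *\<^sub>R ((b - a) + (d - c)) - (1/2) *\<^sub>R ((a + b) - (c + d)) = d - (a::'a::real_vector)"
proof -
  have "(1/2::real) *\<^sub>R ((b - a) + (d - c)) - (1/2) *\<^sub>R ((a + b) - (c + d)) = (1/2::real) *\<^sub>R (((b - a) + (d - c)) - ((a + b) - (c + d)))"
    by (rule scaleR_diff_right[symmetric])
  also have "((b - a) + (d - c)) - ((a + b) - (c + d)) = (2::real) *\<^sub>R (d - a)"
    by (simp add: algebra_simps scaleR_2)
  finally show ?thesis by simp
qed

lemma vec_id2: "(1/2::real) *\<^sub>R (b + d) - (1/2) *\<^sub>R (a + c) - ((1/2) *\<^sub>R (a - c) + (1/2) *\<^sub>R (b - d)) = d - (a::'a::real_vector)"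
proof -
  have "(1/2::real) *\<^sub>R (b + d) - (1/2) *\<^sub>R (a + c) - ((1/2) *\<^sub>R (a - c) + (1/2) *\<^sub>R (b - d))
      = (1/2::real) *\<^sub>R ((b + d) - (a + c) - ((a - c) + (b - d)))"
    by (simp only: scaleR_diff_right scaleR_add_right)
  also have "(b + d) - (a + c) - ((a - c) + (b - d)) = (2::real) *\<^sub>R (d - a)"
    by (simp add: algebra_simps scaleR_2)
  finally show ?thesis by simp
qed

lemma la_main:
  fixes S A R F1 E0 E1 E :: "real^'n^'n" and g \<nu> \<nu>' :: "real^'n"
  assumes F1: "F1 = S ** A" and invF: "invertible F1"
    and e01: "E0 ** E1 = mat 1" and e10: "E1 ** E0 = mat 1" and e00: "E0 ** E0 = E"
    and invSh: "invertible ((1/2) *\<^sub>R (E0 - E1))"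
    and invM: "invertible (S ** R + F1 ** (((1/2) *\<^sub>R (E0 + E1)) ** matrix_inv ((1/2) *\<^sub>R (E0 - E1))))"
  defines "Sh \<equiv> (1/2) *\<^sub>R (E0 - E1)" and "Ch \<equiv> (1/2) *\<^sub>R (E0 + E1)"
  defines "M \<equiv> S ** R + F1 ** (Ch ** matrix_inv Sh)"
  defines "\<theta> \<equiv> 2 *\<^sub>R matrix_inv M"
  shows "(- (\<theta> *v (S *v g)) + ((\<nu>' - \<nu>) - \<theta> *v (S *v ((1/2) *\<^sub>R (A *v (\<nu> + \<nu>')) + (1/2) *\<^sub>R (R *v (\<nu>' - \<nu>))))) = 0)
     \<longleftrightarrow> \<nu>' = E *v \<nu> + ((E - mat 1) ** matrix_inv F1) *v (S *v g)"
proof -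
  define F where "F = S *v g"
  define \<Delta> where "\<Delta> = \<nu>' - \<nu>"
  define \<sigma> where "\<sigma> = \<nu> + \<nu>'"
  define D where "D = (1/2) *\<^sub>R (A *v \<sigma>) + (1/2) *\<^sub>R (R *v \<Delta>)"
  define u where "u = matrix_inv F1 *v (2 *\<^sub>R F)"
  have invSh': "invertible Sh" using invSh unfolding Sh_def .
  have invM': "invertible M" using invM unfolding M_def Ch_def Sh_def .
  have comm: "Sh ** Ch = Ch ** Sh"
    unfolding Sh_def Ch_def
    by (simp add: matrix_scalar_ac scalar_matrix_assoc' matrix_add_ldistrib matrix_add_rdistrib
        matrix_diff_ldistrib matrix_diff_rdistrib e01 e10 algebra_simps)
  have "(- (\<theta> *v F) + (\<Delta> - \<theta> *v (S *v D)) = 0) \<longleftrightarrow> \<Delta> = \<theta> *v (F + S *v D)"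
    by (simp add: algebra_simps matrix_vector_right_distrib)
  also have "\<dots> \<longleftrightarrow> \<Delta> = matrix_inv M *v (2 *\<^sub>R (F + S *v D))"
    unfolding \<theta>_def scaleR_mat_vec matrix_vector_mult_scaleR ..
  also have "\<dots> \<longleftrightarrow> M *v \<Delta> = 2 *\<^sub>R (F + S *v D)"
    by (rule inv_solve[OF invM'])
  also have "\<dots> \<longleftrightarrow> F1 *v (Ch *v (matrix_inv Sh *v \<Delta>)) = F1 *v (u + \<sigma>)"
  proof -
    have "M *v \<Delta> = (S ** R) *v \<Delta> + F1 *v (Ch *v (matrix_inv Sh *v \<Delta>))"
      unfolding M_def by (simp add: matrix_vector_mult_add_rdistrib matrix_vector_mul_assoc)
    moreover have "2 *\<^sub>R (F + S *v D) = (S ** R) *v \<Delta> + F1 *v (u + \<sigma>)"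
    proof -
      have c1: "F1 *v (matrix_inv F1 *v x) = x" for x by (simp add: matrix_vector_mul_assoc inv_props[OF invF])
      have c2: "S *v (A *v x) = F1 *v x" for x by (simp add: F1 matrix_vector_mul_assoc)
      have c3: "S *v (R *v x) = (S ** R) *v x" for x by (simp add: matrix_vector_mul_assoc)
      show ?thesis unfolding D_def u_def
        by (simp add: algebra_simps c1 c2 c3 matrix_vector_mult_scaleR)
    qed
    ultimately show ?thesis by simp
  qed
  also have "\<dots> \<longleftrightarrow> Ch *v (matrix_inv Sh *v \<Delta>) = u + \<sigma>"
    by (rule inv_cancel[OF invF])
  also have "\<dots> \<longleftrightarrow> Sh *v (Ch *v (matrix_inv Sh *v \<Delta>)) = Sh *v (u + \<sigma>)"
    by (rule inv_cancel[OF invSh', symmetric])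
  also have "\<dots> \<longleftrightarrow> Ch *v \<Delta> = Sh *v u + Sh *v \<sigma>"
  proof -
    have "Sh *v (Ch *v (matrix_inv Sh *v \<Delta>)) = ((Ch ** Sh) ** matrix_inv Sh) *v \<Delta>"
      by (simp add: matrix_vector_mul_assoc matrix_mul_assoc comm[symmetric])
    also have "\<dots> = Ch *v \<Delta>"
      by (simp add: matrix_mul_assoc[symmetric] inv_props[OF invSh'])
    finally show ?thesis by (simp add: matrix_vector_right_distrib)
  qed
  also have "\<dots> \<longleftrightarrow> E1 *v \<nu>' = E0 *v \<nu> + Sh *v u"
  proof -
    have "Ch *v \<Delta> - Sh *v \<sigma> = (1/2::real) *\<^sub>R (E0 *v \<nu>' + E1 *v \<nu>') - (1/2) *\<^sub>R (E0 *v \<nu> + E1 *v \<nu>) -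
     ((1/2) *\<^sub>R (E0 *v \<nu> - E1 *v \<nu>) + (1/2) *\<^sub>R (E0 *v \<nu>' - E1 *v \<nu>'))"
      unfolding Ch_def Sh_def \<Delta>_def \<sigma>_def
      by (simp only: scaleR_mat_vec matrix_vector_mult_add_rdistrib matrix_vector_mult_diff_rdistrib
          matrix_vector_right_distrib matrix_vector_mult_diff_distrib scaleR_diff_right)
    also have "\<dots> = E1 *v \<nu>' - E0 *v \<nu>" by (rule vec_id2)
    finally have "Ch *v \<Delta> - Sh *v \<sigma> = E1 *v \<nu>' - E0 *v \<nu>" .
    then show ?thesis by (metis add.commute diff_eq_eq eq_diff_eq)
  qed
  also have "\<dots> \<longleftrightarrow> E0 *v (E1 *v \<nu>') = E0 *v (E0 *v \<nu> + Sh *v u)"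
  proof -
    have invE0: "invertible E0" unfolding invertible_def using e01 e10 by blast
    show ?thesis by (rule inv_cancel[OF invE0, symmetric])
  qed
  also have "\<dots> \<longleftrightarrow> \<nu>' = E *v \<nu> + ((E - mat 1) ** matrix_inv F1) *v (S *v g)"
  proof -
    have "E0 *v (E1 *v \<nu>') = \<nu>'" by (simp add: matrix_vector_mul_assoc e01)
    moreover have "E0 *v (Sh *v u) = ((E - mat 1) ** matrix_inv F1) *v (S *v g)"
    proof -
      have es: "E0 ** Sh = (1/2) *\<^sub>R (E - mat 1)"
        unfolding Sh_def by (simp add: matrix_scalar_ac matrix_diff_ldistrib scalar_matrix_assoc' e00 e01 scaleR_diff_right)
      have "E0 *v (Sh *v u) = (E0 ** Sh) *v u" by (simp only: matrix_vector_mul_assoc)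
      also have "\<dots> = ((1/2) *\<^sub>R (E - mat 1)) *v (matrix_inv F1 *v (2 *\<^sub>R F))" unfolding es u_def ..
      also have "\<dots> = (E - mat 1) *v (matrix_inv F1 *v F)"
        by (simp only: scaleR_mat_vec matrix_vector_mult_scaleR scaleR_scaleR) simp
      also have "\<dots> = ((E - mat 1) ** matrix_inv F1) *v (S *v g)"
        unfolding F_def by (simp only: matrix_vector_mul_assoc matrix_mul_assoc)
      finally show ?thesis .
    qed
    ultimately show ?thesis by (simp add: matrix_vector_right_distrib matrix_vector_mul_assoc e00)
  qed
  finally show ?thesis unfolding F_def \<Delta>_def \<sigma>_def D_def .
qed



lemma has_derivative_vec:
  fixes f :: "'a::real_normed_vector \<Rightarrow> real^'n"
  assumes "\<And>j. ((\<lambda>x. f x $ j) has_derivative (\<lambda>x. f' x $ j)) (at a)"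
  shows "(f has_derivative f') (at a)"
proof (subst has_derivative_componentwise_within, intro ballI)
  fix i :: "real^'n" assume "i \<in> Basis"
  then obtain j where i: "i = axis j 1" by (auto simp: Basis_vec_def)
  show "((\<lambda>x. f x \<bullet> i) has_derivative (\<lambda>x. f' x \<bullet> i)) (at a)"
    unfolding i cart_eq_inner_axis[symmetric] by (rule assms)
qed

theorem proposition6p10:
  fixes H :: "real ^ (bool \<times> 'm::{finite,linorder}) \<Rightarrow> real"
    and ybar :: "real ^ (bool \<times> 'm)"
    and h :: real
  assumes smoothH: "smooth H"
    and hpos: "h > 0"
    and invF': "invertible (symp ** hess H ybar)"
    and coth_wd: "invertible (mat_sinh ((h / 2) *\<^sub>R (symp ** hess H ybar)))"
    and theta_wd: "invertible (symp ** Rmat H ybar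
          + (symp ** hess H ybar) ** mat_coth ((h / 2) *\<^sub>R (symp ** hess H ybar)))"
  shows "\<exists>L. (scheme_resid H ybar h has_derivative L) (at (0, 0)) \<and>
           (\<forall>\<nu> \<nu>'. scheme_resid H ybar h (0, 0) + L (\<nu>, \<nu>') = 0 \<longleftrightarrow>
              \<nu>' = mat_exp (h *\<^sub>R (symp ** hess H ybar)) *v \<nu>
                   + ((mat_exp (h *\<^sub>R (symp ** hess H ybar)) - mat 1)
                       ** matrix_inv (symp ** hess H ybar)) *v (symp *v grad H ybar))"
proof -
  define A where "A = hess H ybar"
  define F1 where "F1 = symp ** A"
  define R where "R = Rmat H ybar"
  define g where "g = grad H ybar"
  define \<theta> where "\<theta> = theta H ybar h"
  define DGm where "DGm = (\<lambda>p::(real^(bool \<times> 'm)) \<times> (real^(bool \<times> 'm)). coord_incr_dg H (ybar + fst p) (ybar + snd p))"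
  define DL where "DL = (\<lambda>p::(real^(bool \<times> 'm)) \<times> (real^(bool \<times> 'm)).
      (1/2) *\<^sub>R (A *v (fst p + snd p)) + (1/2) *\<^sub>R (R *v (snd p - fst p)))"
  have dDG: "(DGm has_derivative DL) (at (0, 0))"
  proof (rule has_derivative_vec)
    fix j
    have "DL p $ j = (\<Sum>k\<in>UNIV. partial k (partial j H) ybar * midv j (fst p) (snd p) $ k)" for p
    proof -
      have "DL p $ j = (\<Sum>k\<in>UNIV. A$j$k * midv j (fst p) (snd p) $ k)"
        unfolding DL_def
        by (auto simp: matrix_vector_mult_def sum_distrib_left sum.distrib[symmetric] midv_def R_def Rmat_def A_def
            algebra_simps add_divide_distrib diff_divide_distrib intro!: sum.cong)
      also have "\<dots> = (\<Sum>k\<in>UNIV. partial k (partial j H) ybar * midv j (fst p) (snd p) $ k)"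
        by (simp add: A_def hess_def schwarz[OF smoothH])
      finally show ?thesis .
    qed
    then show "((\<lambda>x. DGm x $ j) has_derivative (\<lambda>x. DL x $ j)) (at (0, 0))"
      unfolding DGm_def using dg_comp_deriv[OF smoothH, of ybar j] by simp
  qed
  define L where "L = (\<lambda>p. snd p - fst p - \<theta> *v (symp *v DL p))"
  have res: "scheme_resid H ybar h = (\<lambda>p. snd p - fst p - \<theta> *v (symp *v DGm p))"
    by (simp add: fun_eq_iff scheme_resid_def DGm_def \<theta>_def split_beta)
  have dres: "(scheme_resid H ybar h has_derivative L) (at (0, 0))"
    unfolding res L_def
    by (intro has_derivative_diff has_derivative_snd has_derivative_fst has_derivative_ident
        bounded_linear.has_derivative[OF matrix_vector_mul_bounded_linear] dDG)
  have g0: "coord_incr_dg H ybar ybar = g"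
    by (simp add: vec_eq_iff coord_incr_dg_def hat_le_self g_def grad_def)
  have r0: "scheme_resid H ybar h (0, 0) = - (\<theta> *v (symp *v g))"
    by (simp add: res DGm_def g0)
  define E0 where "E0 = mat_exp ((h/2) *\<^sub>R F1)"
  define E1 where "E1 = mat_exp ((-(h/2)) *\<^sub>R F1)"
  define E where "E = mat_exp (h *\<^sub>R F1)"
  have e01: "E0 ** E1 = mat 1" unfolding E0_def E1_def
    using mat_exp_add[of "h/2" F1 "-(h/2)"] mat_exp_zero[of F1] by simp
  have e10: "E1 ** E0 = mat 1" unfolding E0_def E1_def
    using mat_exp_add[of "-(h/2)" F1 "h/2"] mat_exp_zero[of F1] by simp
  have e00: "E0 ** E0 = E" unfolding E0_def E_def
    using mat_exp_add[of "h/2" F1 "h/2"] by simp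
  have sh: "mat_sinh ((h / 2) *\<^sub>R F1) = (1/2) *\<^sub>R (E0 - E1)"
    unfolding mat_sinh_def E0_def E1_def by (simp add: scaleR_minus_left)
  have ch: "mat_cosh ((h / 2) *\<^sub>R F1) = (1/2) *\<^sub>R (E0 + E1)"
    unfolding mat_cosh_def E0_def E1_def by (simp add: scaleR_minus_left)
  have coth: "mat_coth ((h / 2) *\<^sub>R F1) = ((1/2) *\<^sub>R (E0 + E1)) ** matrix_inv ((1/2) *\<^sub>R (E0 - E1))"
    unfolding mat_coth_def sh ch ..
  have invSh: "invertible ((1/2) *\<^sub>R (E0 - E1))" using coth_wd unfolding sh[symmetric] F1_def A_def .
  have invM: "invertible (symp ** R + F1 ** (((1/2) *\<^sub>R (E0 + E1)) ** matrix_inv ((1/2) *\<^sub>R (E0 - E1))))"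
    using theta_wd unfolding coth[symmetric] F1_def A_def R_def .
  have th: "\<theta> = 2 *\<^sub>R matrix_inv (symp ** R + F1 ** (((1/2) *\<^sub>R (E0 + E1)) ** matrix_inv ((1/2) *\<^sub>R (E0 - E1))))"
    unfolding \<theta>_def theta_def coth[symmetric] F1_def A_def R_def ..
  have invF: "invertible F1" using invF' unfolding F1_def A_def .
  have LA: "(- (\<theta> *v (symp *v g)) + L (\<nu>, \<nu>') = 0) \<longleftrightarrow>
      \<nu>' = E *v \<nu> + ((E - mat 1) ** matrix_inv F1) *v (symp *v g)" for \<nu> \<nu>'
    unfolding L_def DL_def fst_conv snd_conv th
    by (rule la_main[OF F1_def invF e01 e10 e00 invSh invM])
  have fin: "\<forall>\<nu> \<nu>'. scheme_resid H ybar h (0, 0) + L (\<nu>, \<nu>') = 0 \<longleftrightarrow>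
              \<nu>' = mat_exp (h *\<^sub>R (symp ** hess H ybar)) *v \<nu>
                   + ((mat_exp (h *\<^sub>R (symp ** hess H ybar)) - mat 1)
                       ** matrix_inv (symp ** hess H ybar)) *v (symp *v grad H ybar)"
  proof (intro allI)
    fix \<nu> \<nu>'
    show "scheme_resid H ybar h (0, 0) + L (\<nu>, \<nu>') = 0 \<longleftrightarrow>
              \<nu>' = mat_exp (h *\<^sub>R (symp ** hess H ybar)) *v \<nu>
                   + ((mat_exp (h *\<^sub>R (symp ** hess H ybar)) - mat 1)
                       ** matrix_inv (symp ** hess H ybar)) *v (symp *v grad H ybar)"
      using LA[of \<nu> \<nu>'] unfolding r0 E_def F1_def A_def g_def .
  qed
  show ?thesis by (intro exI[of _ L] conjI dres fin)
qed


end
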